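(* Let $k\in\mathbb{Z}$. For every $n\in\mathbb{N}=\{1,2,\dots\}$, $$E_{n-1}^{(k)}(x)=\frac{1}{n}\sum_{j=1}^{n}\sum_{m=1}^{j}\binom{n}{j}\frac{S_{1}(j,m)}{m^{k-1}}E_{n-j}(x).$$
   Context: Euler polynomials $E_n(x)$ are defined by $\frac{2}{e^t+1}e^{xt}=\sum_{n=0}^{\infty}E_n(x)\frac{t^n}{n!}$. For $k\in\mathbb{Z}$, $\mathrm{Ei}_k(x)=\sum_{n=1}^{\infty}\frac{x^n}{n^k(n-1)!}$; the poly-Genocchi polynomials $G_n^{(k)}(x)$ are defined by $\frac{2\,\mathrm{Ei}_k(\log(1+t))}{e^t+1}e^{xt}=\sum_{n=0}^{\infty}G_n^{(k)}(x)\frac{t^n}{n!}$, and the poly-Euler polynomials are $E_n^{(k)}(x)=\frac{G_{n+1}^{(k)}(x)}{n+1}$ ($n\ge0$). $S_1(n,m)$ are the signed Stirling numbers of the first kind: $\frac{(\log(1+t))^m}{m!}=\sum_{n=m}^{\infty}S_1(n,m)\frac{t^n}{n!}$. *)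

theory Defs
  imports "HOL-Computational_Algebra.Formal_Power_Series"
begin

definition euler_gf :: "real \<Rightarrow> real fps" where
  "euler_gf x = fps_const 2 * inverse (fps_exp 1 + 1) * fps_exp x"

definition euler_poly :: "nat \<Rightarrow> real \<Rightarrow> real" where
  "euler_poly n x = fact n * fps_nth (euler_gf x) n"

definition Ei_fps :: "int \<Rightarrow> real fps" where
  "Ei_fps k = Abs_fps (\<lambda>n. if n = 0 then 0 else 1 / ((real n powi k) * fact (n - 1)))"

definition poly_genocchi :: "int \<Rightarrow> nat \<Rightarrow> real \<Rightarrow> real" where
  "poly_genocchi k n x = fact n * fps_nth (fps_compose (Ei_fps k) (fps_ln 1) * euler_gf x) n"

definition poly_euler :: "int \<Rightarrow> nat \<Rightarrow> real \<Rightarrow> real" where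
  "poly_euler k n x = poly_genocchi k (n + 1) x / real (n + 1)"

text \<open>Signed Stirling numbers of the first kind: (log(1+t))^m/m! = sum S1(n,m) t^n/n!.\<close>
definition S1 :: "nat \<Rightarrow> nat \<Rightarrow> real" where
  "S1 n m = fact n * fps_nth (fps_const (1 / fact m) * fps_ln 1 ^ m) n"

end

theory Submission
  imports Defs
begin

lemma coeffC:
  fixes k :: int
  shows "fps_nth (fps_compose (Ei_fps k) (fps_ln 1)) j =
     (\<Sum>m=1..j. (S1 j m / (real m powi (k - 1))) / fact j)"
proof -
  have "fps_nth (fps_compose (Ei_fps k) (fps_ln 1)) j = (\<Sum>m=0..j. fps_nth (Ei_fps k) m * (fps_nth (fps_ln 1 ^ m) j))"
    by (simp add: fps_compose_nth)
  also have "\<dots> = (\<Sum>m=1..j. fps_nth (Ei_fps k) m * (fps_nth (fps_ln 1 ^ m) j))"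
    by (rule sum.atLeast_Suc_atMost[THEN trans]) (auto simp: Ei_fps_def intro: sum.cong)
  also have "\<dots> = (\<Sum>m=1..j. (S1 j m / (real m powi (k - 1))) / fact j)"
  proof (rule sum.cong[OF refl])
    fix m assume m: "m \<in> {1..j}"
    have L: "fps_nth (fps_ln 1 ^ m) j = S1 j m * fact m / fact j"
      by (simp add: S1_def)
    have P: "real m powi k = real m * real m powi (k - 1)"
      using m by (simp add: power_int_diff)
    have F: "fact m = real m * fact (m - 1)"
      using m by (metis fact_reduce of_nat_0_less_iff zero_less_iff_neq_zero atLeastAtMost_iff
          le_zero_eq not_one_le_zero)
    show "fps_nth (Ei_fps k) m * (fps_nth (fps_ln 1 ^ m) j) = (S1 j m / (real m powi (k - 1))) / fact j"
      using m by (simp add: Ei_fps_def L P F field_simps)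
  qed
  finally show ?thesis .
qed

theorem theorem3:
  fixes k :: int and n :: nat and x :: real
  assumes "n \<ge> 1"
  shows "poly_euler k (n - 1) x =
    (1 / real n) * (\<Sum>j=1..n. \<Sum>m=1..j.
       real (n choose j) * (S1 j m / (real m powi (k - 1))) * euler_poly (n - j) x)"
proof -
  have n1: "n - 1 + 1 = n" using assms by simp
  have E: "fps_nth (euler_gf x) i = euler_poly i x / fact i" for i
    by (simp add: euler_poly_def)
  have "poly_genocchi k n x = fact n * (\<Sum>j=0..n. fps_nth (fps_compose (Ei_fps k) (fps_ln 1)) j * fps_nth (euler_gf x) (n - j))"
    by (simp add: poly_genocchi_def fps_mult_nth)
  also have "\<dots> = (\<Sum>j=0..n. \<Sum>m=1..j.
       real (n choose j) * (S1 j m / (real m powi (k - 1))) * euler_poly (n - j) x)"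
    unfolding sum_distrib_left
  proof (rule sum.cong[OF refl])
    fix j assume j: "j \<in> {0..n}"
    have b: "real (n choose j) = fact n / (fact j * fact (n - j))"
      using j by (simp add: binomial_fact)
    show "fact n * (fps_nth (fps_compose (Ei_fps k) (fps_ln 1)) j * fps_nth (euler_gf x) (n - j)) =
      (\<Sum>m=1..j. real (n choose j) * (S1 j m / (real m powi (k - 1))) * euler_poly (n - j) x)"
      unfolding coeffC E b sum_distrib_left sum_distrib_right
      by (rule sum.cong[OF refl]) (simp add: field_simps)
  qed
  also have "\<dots> = (\<Sum>j=1..n. \<Sum>m=1..j.
       real (n choose j) * (S1 j m / (real m powi (k - 1))) * euler_poly (n - j) x)"
    by (rule sum.atLeast_Suc_atMost[THEN trans]) auto
  finally show ?thesis unfolding poly_euler_def n1 by simp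
qed

end
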